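(* For every positive integer $n$, the number $Z(n)=\sum_{k=0}^{n-1}M_{k}(n)$ is an integer, where $M_k(n)=\frac{1+(-1)^{k}k!(n-k-1)!}{n}$.
   Context: For integers $n\geq 1$ and $0\leq k\leq n-1$, $M_{k}(n)=\frac{1+(-1)^{k}k!(n-k-1)!}{n}$ (a rational number), and $Z(n)=\sum_{k=0}^{n-1}M_{k}(n)$. *)

theory Defs
  imports Complex_Main
begin

definition M :: "nat \<Rightarrow> nat \<Rightarrow> rat" where
  "M k n = (1 + (-1) ^ k * fact k * fact (n - k - 1)) / of_nat n"

definition Z :: "nat \<Rightarrow> rat" where
  "Z n = (\<Sum>k<n. M k n)"

end

theory Submission
  imports Defs
begin

definition aa :: "nat \<Rightarrow> nat \<Rightarrow> int" where
  "aa m k = fact k * fact (m - k)"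

lemma term_id:
  assumes "k < m"
  shows "(-1)^k * aa m k + (-1)^k * aa m (Suc k) = (-1)^k * (int m + 1) * (fact k * fact (m - 1 - k))"
proof -
  have e1: "fact (m - k) = (int (m - k)) * (fact (m - 1 - k) :: int)"
    using assms by (metis Suc_diff_Suc diff_Suc_1 diff_commute fact_Suc of_nat_fact of_nat_mult)
  have e2: "m - Suc k = m - 1 - k" by simp
  have "aa m k + aa m (Suc k) = (int m + 1) * (fact k * fact (m - 1 - k))"
    unfolding aa_def e2 e1 using assms by (simp add: algebra_simps of_nat_diff)
  then show ?thesis by (metis distrib_left mult.assoc)
qed

lemma closed:
  "(int m + 1) * (\<Sum>k<m. (-1)^k * (fact k * fact (m - 1 - k))) = fact m * (1 - (-1)^m)"
proof -
  define f where "f k = - ((-1)^k * aa m k)" for k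
  have "(\<Sum>k<m. f (Suc k) - f k) = f m - f 0" by (rule sum_lessThan_telescope)
  also have "f m - f 0 = fact m * (1 - (-1)^m)" unfolding f_def aa_def by (simp add: right_diff_distrib)
  also have "(\<Sum>k<m. f (Suc k) - f k) = (\<Sum>k<m. (-1)^k * (int m + 1) * (fact k * fact (m - 1 - k)))"
  proof (rule sum.cong)
    fix k assume "k \<in> {..<m}"
    then have "k < m" by simp
    have "f (Suc k) - f k = (-1)^k * aa m k + (-1)^k * aa m (Suc k)" unfolding f_def by simp
    then show "f (Suc k) - f k = (-1)^k * (int m + 1) * (fact k * fact (m - 1 - k))"
      using term_id[OF \<open>k < m\<close>] by simp
  qed simp
  also have "\<dots> = (int m + 1) * (\<Sum>k<m. (-1)^k * (fact k * fact (m - 1 - k)))"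
    by (simp add: sum_distrib_left mult.assoc mult.left_commute)
  finally show ?thesis .
qed

lemma divis:
  assumes "n \<ge> 1"
  shows "int n dvd (\<Sum>k<n. (-1)^k * (fact k * fact (n - 1 - k)))"
proof (cases "even n")
  case True
  then have "(int n + 1) * (\<Sum>k<n. (-1)^k * (fact k * fact (n - 1 - k))) = 0"
    using closed[of n] by simp
  then show ?thesis by simp
next
  case False
  then obtain j where j: "n = 2*j+1" by (metis oddE)
  define S where "S = (\<Sum>k<n. (-1)^k * (fact k * (fact (n - 1 - k) :: int)))"
  have "(int n + 1) * S = 2 * fact n" using closed[of n] False unfolding S_def by simp
  then have h: "(int j + 1) * S = fact n" using j by (simp add: algebra_simps)
  have "fact n = int n * fact (n - 1)"
    using assms by (intro fact_reduce) simp
  moreover have "(int j + 1) dvd fact (n - 1)"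
  proof (cases "j = 0")
    case True then show ?thesis by simp
  next
    case False
    then have "Suc j \<le> n - 1" using j by simp
    then have "Suc j dvd (fact (n - 1) :: nat)" using dvd_fact[of "Suc j" "n-1"] by simp
    then have "int (Suc j) dvd int (fact (n - 1))" by (rule int_dvd_int_iff[THEN iffD2])
    then show ?thesis by (metis of_nat_fact of_nat_Suc add.commute)
  qed
  then obtain q where q: "fact (n - 1) = (int j + 1) * q" by (auto elim: dvdE)
  ultimately have "(int j + 1) * S = (int j + 1) * (int n * q)" using h by (simp add: algebra_simps)
  then have "S = int n * q" by simp
  then show ?thesis unfolding S_def by simp
qed

theorem theorem1:
  fixes n :: nat
  assumes "n \<ge> 1"
  shows "Z n \<in> \<int>"
proof -
  obtain q where q: "(\<Sum>k<n. (-1)^k * (fact k * fact (n - 1 - k))) = int n * q"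
    using divis[OF assms] by (auto elim: dvdE)
  have q': "(\<Sum>k<n. (-1)^k * (fact k * fact (n - 1 - k)) :: rat) = of_nat n * of_int q"
    using arg_cong[OF q, of "of_int :: int \<Rightarrow> rat"] by simp
  have "Z n = (\<Sum>k<n. (1 + (-1)^k * fact k * fact (n - k - 1))) / of_nat n"
    unfolding Z_def M_def by (simp add: sum_divide_distrib)
  also have "\<dots> = (of_nat n + of_nat n * of_int q) / of_nat n"
    using q' by (simp add: sum.distrib algebra_simps)
  also have "\<dots> = 1 + of_int q" using assms by (simp add: field_simps)
  finally show ?thesis by simp
qed

end
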